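(* Let $\Sigma$ be a graded alphabet and $t\in T_\Sigma$. Then the relation $\sim_\mathrm{h}$ on the state set $\mathrm{SubTree}(t^\sharp)$ of the subtree automaton $A_t$, defined by $r_1\sim_\mathrm{h}r_2\iff\mathrm{h}(r_1)=\mathrm{h}(r_2)$, is down compatible with $A_t$.
   Context: A graded alphabet is a finite set $\Sigma=\bigcup_{k\in\mathbb{N}}\Sigma_k$; $T_\Sigma$ is the set of trees $f(t_1,\ldots,t_k)$ with $f\in\Sigma_k$. A RWTA is $A=(\Sigma,Q,\nu,\delta)$ with $Q$ finite, $\nu:Q\to\mathbb{N}$, $\delta\subseteq\bigcup_k Q\times\Sigma_k\times Q^k$; $\delta(f,q_1,\ldots,q_k)=\{q\mid(q,f,q_1,\ldots,q_k)\in\delta\}$, extended to subsets by union over tuples; $\Delta(f(t_1,\ldots,t_k))=\delta(f,\Delta(t_1),\ldots,\Delta(t_k))$. The down language of a state $q$ is $L_q(A)=\{s\in T_\Sigma\mid q\in\Delta(s)\}$; an equivalence relation $\sim$ on $Q$ is down compatible with $A$ if $q_1\sim q_2$ implies $L_{q_1}(A)=L_{q_2}(A)$. For $t=f(t_1,\ldots,t_k)$, $\mathrm{SubTree}(t)=\{t\}\cup\bigcup_j\mathrm{SubTree}(t_j)$. The tree $t^\sharp$ is obtained from $t$ by indexing each symbol occurrence with its position in a preorder traversal (indexed symbols are distinct and keep their arity); $\Sigma_{t^\sharp}$ is the set of indexed symbols of $t^\sharp$; $\mathrm{h}$ erases indices. The subtree automaton of $t$ is $A_t=(\Sigma,Q,\nu,\delta)$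 with $Q=\mathrm{SubTree}(t^\sharp)$, $\nu\equiv1$, and for $f\in\Sigma_{t^\sharp}$ of arity $k$ and $t_1,\ldots,t_{k+1}\in Q$: $t_{k+1}\in\delta(\mathrm{h}(f),t_1,\ldots,t_k)$ iff $t_{k+1}=f(t_1,\ldots,t_k)$. *)

theory Defs
  imports Main
begin

datatype 'f tree = Node 'f "'f tree list"

fun wf_tree :: "('f \<times> nat) set \<Rightarrow> 'f tree \<Rightarrow> bool" where
  "wf_tree \<Sigma> (Node f ts) = ((f, length ts) \<in> \<Sigma> \<and> (\<forall>s\<in>set ts. wf_tree \<Sigma> s))"

definition trees :: "('f \<times> nat) set \<Rightarrow> 'f tree set" where
  "trees \<Sigma> = {t. wf_tree \<Sigma> t}"

record ('f, 'q) rwta =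
  alph :: "('f \<times> nat) set"
  states :: "'q set"
  weight :: "'q \<Rightarrow> nat"
  trans :: "('q \<times> 'f \<times> 'q list) set"

fun Delta :: "('f, 'q) rwta \<Rightarrow> 'f tree \<Rightarrow> 'q set" where
  "Delta A (Node f ts) =
     {q. \<exists>qs. (q, f, qs) \<in> trans A \<and> list_all2 (\<in>) qs (map (Delta A) ts)}"

definition down_lang :: "('f, 'q) rwta \<Rightarrow> 'q \<Rightarrow> 'f tree set" where
  "down_lang A q = {s \<in> trees (alph A). q \<in> Delta A s}"

definition down_compatible :: "('f, 'q) rwta \<Rightarrow> ('q \<times> 'q) set \<Rightarrow> bool" where
  "down_compatible A R \<longleftrightarrow> equiv (states A) R \<and>
     (\<forall>q1 q2. (q1, q2) \<in> R \<longrightarrow> down_lang A q1 = down_lang A q2)"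

fun subtrees :: "'f tree \<Rightarrow> 'f tree set" where
  "subtrees (Node f ts) = insert (Node f ts) (\<Union>s\<in>set ts. subtrees s)"

fun nodes :: "'f tree \<Rightarrow> nat" where
  "nodes (Node f ts) = Suc (sum_list (map nodes ts))"

text \<open>Preorder indexing: idx n t labels each node with its preorder position, starting at n.\<close>
fun idx :: "nat \<Rightarrow> 'f tree \<Rightarrow> ('f \<times> nat) tree"
and idxs :: "nat \<Rightarrow> 'f tree list \<Rightarrow> ('f \<times> nat) tree list" where
  "idx n (Node f ts) = Node (f, n) (idxs (Suc n) ts)"
| "idxs n [] = []"
| "idxs n (s # ss) = idx n s # idxs (n + nodes s) ss"

definition sharp :: "'f tree \<Rightarrow> ('f \<times> nat) tree" where
  "sharp t = idx 0 t"

definition erase :: "('f \<times> nat) tree \<Rightarrow> 'f tree" where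
  "erase r = map_tree fst r"

definition syms :: "'g tree \<Rightarrow> ('g \<times> nat) set" where
  "syms t = {(g, length rs) | g rs. Node g rs \<in> subtrees t}"

definition subtree_aut :: "('f \<times> nat) set \<Rightarrow> 'f tree \<Rightarrow> ('f, ('f \<times> nat) tree) rwta" where
  "subtree_aut \<Sigma> t =
    \<lparr> alph = \<Sigma>,
      states = subtrees (sharp t),
      weight = (\<lambda>_. 1),
      trans = {(q, fst g, qs) | q g qs.
                 (g, length qs) \<in> syms (sharp t) \<and> q \<in> subtrees (sharp t)
                 \<and> set qs \<subseteq> subtrees (sharp t) \<and> q = Node g qs} \<rparr>"

end

theory Submission
  imports Defs
begin

lemma subtrees_refl: "t \<in> subtrees t"
  by (cases t) auto

lemma subtrees_trans: "u \<in> subtrees v \<Longrightarrow> subtrees u \<subseteq> subtrees v"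
proof (induction v)
  case (Node f ts)
  then show ?case by auto
qed

lemma child_sub: "Node g qs \<in> subtrees v \<Longrightarrow> set qs \<subseteq> subtrees v"
  using subtrees_trans[of "Node g qs" v] subtrees_refl by fastforce

lemma erase_Node: "erase (Node g qs) = Node (fst g) (map erase qs)"
  by (simp add: erase_def)

lemma list_all2_erase:
  assumes "\<And>q s. s \<in> set ts \<Longrightarrow> q \<in> Delta A s \<longleftrightarrow> q \<in> S \<and> erase q = s"
  shows "list_all2 (\<in>) qs (map (Delta A) ts) \<longleftrightarrow> set qs \<subseteq> S \<and> map erase qs = ts"
  using assms
proof (induction ts arbitrary: qs)
  case Nil
  then show ?case by auto
next
  case (Cons s ts)
  have IH: "\<And>qs. list_all2 (\<in>) qs (map (Delta A) ts) \<longleftrightarrow> set qs \<subseteq> S \<and> map erase qs = ts"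
    using Cons.IH Cons.prems by simp
  have h: "\<And>q. q \<in> Delta A s \<longleftrightarrow> q \<in> S \<and> erase q = s" using Cons.prems by simp
  show ?case
  proof (cases qs)
    case Nil then show ?thesis by simp
  next
    case (Cons q qs')
    show ?thesis unfolding Cons list.rel_inject(2) list.map IH h by auto
  qed
qed
lemma trans_char: "(q, f, qs) \<in> trans (subtree_aut \<Sigma> t) \<longleftrightarrow>
  (\<exists>g. q = Node g qs \<and> f = fst g \<and> q \<in> subtrees (sharp t))"
proof
  assume "(q, f, qs) \<in> trans (subtree_aut \<Sigma> t)"
  then show "\<exists>g. q = Node g qs \<and> f = fst g \<and> q \<in> subtrees (sharp t)"
    unfolding subtree_aut_def by (simp, blast)
next
  assume "\<exists>g. q = Node g qs \<and> f = fst g \<and> q \<in> subtrees (sharp t)"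
  then obtain g where a: "q = Node g qs" "f = fst g" "q \<in> subtrees (sharp t)" by blast
  have "(g, length qs) \<in> syms (sharp t)" using a unfolding syms_def by blast
  moreover have "set qs \<subseteq> subtrees (sharp t)" using a child_sub[of g qs "sharp t"] by simp
  ultimately show "(q, f, qs) \<in> trans (subtree_aut \<Sigma> t)" using a
    unfolding subtree_aut_def by (cases g) simp
qed

lemma Delta_char:
  "q \<in> Delta (subtree_aut \<Sigma> t) s \<longleftrightarrow> q \<in> subtrees (sharp t) \<and> erase q = s"
proof (induction "subtree_aut \<Sigma> t" s arbitrary: q rule: Delta.induct)
  case (1 f ts)
  let ?S = "subtrees (sharp t)"
  have L: "\<And>qs. list_all2 (\<in>) qs (map (Delta (subtree_aut \<Sigma> t)) ts) \<longleftrightarrow> set qs \<subseteq> ?S \<and> map erase qs = ts"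
    by (rule list_all2_erase, rule "1")
  have D: "q \<in> Delta (subtree_aut \<Sigma> t) (Node f ts) \<longleftrightarrow>
     (\<exists>qs. (q, f, qs) \<in> trans (subtree_aut \<Sigma> t) \<and> list_all2 (\<in>) qs (map (Delta (subtree_aut \<Sigma> t)) ts))"
    by (simp only: Delta.simps mem_Collect_eq)
  show ?case
  proof
    assume "q \<in> Delta (subtree_aut \<Sigma> t) (Node f ts)"
    then obtain qs where tr: "(q, f, qs) \<in> trans (subtree_aut \<Sigma> t)"
      and la: "list_all2 (\<in>) qs (map (Delta (subtree_aut \<Sigma> t)) ts)" using D by blast
    from tr obtain g where "q \<in> ?S" "q = Node g qs" "f = fst g"
      unfolding trans_char by blast
    with la L show "q \<in> ?S \<and> erase q = Node f ts" by (simp add: erase_Node)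
  next
    assume a: "q \<in> ?S \<and> erase q = Node f ts"
    obtain g qs where q: "q = Node g qs" by (cases q)
    have e: "erase (Node g qs) = Node f ts" using a q by simp
    hence f: "f = fst g" and m: "map erase qs = ts" unfolding erase_Node by simp_all
    have qS: "set qs \<subseteq> ?S" using child_sub[of g qs "sharp t"] a q by simp
    have "(q, f, qs) \<in> trans (subtree_aut \<Sigma> t)"
      unfolding trans_char using a q f by blast
    moreover have "list_all2 (\<in>) qs (map (Delta (subtree_aut \<Sigma> t)) ts)" using L qS m by simp
    ultimately show "q \<in> Delta (subtree_aut \<Sigma> t) (Node f ts)" unfolding D by blast
  qed
qed

theorem lemma8:
  fixes \<Sigma> :: "('f \<times> nat) set" and t :: "'f tree"
  assumes "finite \<Sigma>" and "t \<in> trees \<Sigma>"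
  shows "down_compatible (subtree_aut \<Sigma> t)
           {(r1, r2). r1 \<in> subtrees (sharp t) \<and> r2 \<in> subtrees (sharp t) \<and> erase r1 = erase r2}"
  unfolding down_compatible_def
proof
  show "equiv (states (subtree_aut \<Sigma> t))
     {(r1, r2). r1 \<in> subtrees (sharp t) \<and> r2 \<in> subtrees (sharp t) \<and> erase r1 = erase r2}"
    by (auto simp: equiv_def refl_on_def sym_def Relation.trans_def subtree_aut_def)
  show "\<forall>q1 q2. (q1, q2) \<in> {(r1, r2). r1 \<in> subtrees (sharp t) \<and> r2 \<in> subtrees (sharp t) \<and> erase r1 = erase r2} \<longrightarrow>
        down_lang (subtree_aut \<Sigma> t) q1 = down_lang (subtree_aut \<Sigma> t) q2"
    by (auto simp: down_lang_def Delta_char)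
qed

end
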